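(* Let $\mathbf k$ be an algebraically closed field of characteristic zero. Let $n\geq 1$ and write $n=2^{k_0}p_1^{k_1}\cdots p_l^{k_l}$ with $p_1,\dots,p_l$ distinct odd primes and $k_0,\dots,k_l\in\mathbb N$. Then the number $c(n)$ of monoidal equivalence classes of categories of the form $\mathrm{Vec}_{\mathbb Z_n}^{\zeta}$, with $\zeta$ ranging over the $n$-th roots of unity in $\mathbf k$, is $$c(n)=\begin{cases}\prod_{i=1}^{l}(2k_i+1) & \text{if } k_0=0,\\ 2\prod_{i=1}^{l}(2k_i+1) & \text{if } k_0=1,\\ 4\prod_{i=1}^{l}(2k_i+1) & \text{if } k_0=2,\\ 4(k_0-1)\prod_{i=1}^{l}(2k_i+1) & \text{if } k_0\geq 3.\end{cases}$$
   Context: For an $n$-th root of unity $\zeta$, $\mathrm{Vec}_{\mathbb Z_n}^{\zeta}$ denotes the pointed fusion category of finite-dimensional $\mathbb Z_n$-graded $\mathbf k$-vector spaces with the usual graded tensor product, unit $\delta_0$, unit isomorphisms identities, and associativity isomorphism on $(\delta_i\otimes\delta_j)\otimes\delta_k\to\delta_i\otimes(\delta_j\otimes\delta_k)$ given by multiplication by $\omega_\zeta(i,j,k)=\zeta^{\,i(j+k-\overline{j+k})/n}$, where $i,j,k$ are represented by integers in $\{0,\dots,n-1\}$ and $\overline{m}$ denotes the remainder of $m$ upon division by $n$. *)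

theory Defs
  imports "HOL-Computational_Algebra.Computational_Algebra"
begin

text \<open>The associator of Vec_{Z_n}^zeta on simple objects delta_i, delta_j, delta_k
  (i, j, k in {0..n-1}):  zeta ^ (i (j + k - ((j+k) mod n)) / n).\<close>
definition omega_vec :: "nat \<Rightarrow> 'k::field \<Rightarrow> nat \<Rightarrow> nat \<Rightarrow> nat \<Rightarrow> 'k" where
  "omega_vec n \<zeta> i j k = \<zeta> ^ (i * ((j + k - (j + k) mod n) div n))"

text \<open>A monoidal equivalence Vec_{Z_n}^zeta -> Vec_{Z_n}^zeta', written out on the
  (skeletal, semisimple) data: a bijection sigma of the simple objects {0..n-1}
  compatible with the tensor product (an automorphism of Z_n), nonzero scalars
  mu i j giving the tensor structure J : F delta_i (x) F delta_j -> F(delta_i (x) delta_j),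
  a nonzero scalar phi : 1 -> F 1, subject to the hexagon (associativity) axiom and
  the two unit axioms (unit isomorphisms are identities).\<close>
definition vec_monoidal_equiv :: "nat \<Rightarrow> 'k::field \<Rightarrow> 'k \<Rightarrow> bool" where
  "vec_monoidal_equiv n \<zeta> \<zeta>' \<longleftrightarrow>
     (\<exists>\<sigma> :: nat \<Rightarrow> nat. \<exists>\<mu> :: nat \<Rightarrow> nat \<Rightarrow> 'k. \<exists>\<phi> :: 'k.
        bij_betw \<sigma> {..<n} {..<n} \<and>
        (\<forall>i<n. \<forall>j<n. \<sigma> ((i + j) mod n) = (\<sigma> i + \<sigma> j) mod n) \<and>
        \<phi> \<noteq> 0 \<and> (\<forall>i<n. \<forall>j<n. \<mu> i j \<noteq> 0) \<and>
        (\<forall>i<n. \<forall>j<n. \<forall>k<n.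
            omega_vec n \<zeta> i j k * \<mu> ((i + j) mod n) k * \<mu> i j
          = \<mu> i ((j + k) mod n) * \<mu> j k * omega_vec n \<zeta>' (\<sigma> i) (\<sigma> j) (\<sigma> k)) \<and>
        (\<forall>j<n. \<mu> 0 j * \<phi> = 1) \<and> (\<forall>i<n. \<mu> i 0 * \<phi> = 1))"

definition c_count :: "'k::field itself \<Rightarrow> nat \<Rightarrow> nat" where
  "c_count _ n = card ({\<zeta>::'k. \<zeta> ^ n = 1} //
      {(\<zeta>, \<zeta>'). \<zeta> ^ n = 1 \<and> \<zeta>' ^ n = 1 \<and> vec_monoidal_equiv n \<zeta> \<zeta>'})"

end

theory Submission
  imports Defs "HOL-Number_Theory.Number_Theory"
begin

lemma omega_simp: "omega_vec n z i j k = z ^ (i * ((j + k) div n))"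
  unfolding omega_vec_def by (cases "n = 0") (simp_all add: minus_mod_eq_mult_div)

lemma pow_mod_root:
  fixes z :: "'a::comm_monoid_mult"
  assumes "z ^ n = 1" shows "z ^ a = z ^ (a mod n)"
proof -
  have "z ^ a = z ^ (n * (a div n) + a mod n)" by simp
  also have "\<dots> = z ^ (a mod n)" by (simp only: power_add power_mult assms power_one mult_1)
  finally show ?thesis .
qed

lemma pow_cong_root:
  fixes z :: "'a::comm_monoid_mult"
  assumes "z ^ n = 1" "[a = b] (mod n)" shows "z ^ a = z ^ b"
  using pow_mod_root[OF assms(1), of a] pow_mod_root[OF assms(1), of b] assms(2)
  unfolding cong_def by simp

lemma card_carry:
  fixes u n :: nat
  assumes "u < n"
  shows "(\<Sum>j<n. (j + u) div n) = u"
proof -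
  have "(\<Sum>j<n. (j + u) div n) = (\<Sum>j<n. if n \<le> j + u then 1 else 0)"
  proof (rule sum.cong)
    fix j assume "j \<in> {..<n}"
    then have "j + u < 2 * n" using assms by auto
    then show "(j + u) div n = (if n \<le> j + u then 1 else 0)"
      using assms by (auto simp: div_if less_mult_imp_div_less)
  qed simp
  also have "\<dots> = card {j. j < n \<and> n \<le> j + u}"
    by (simp add: sum.If_cases Int_def)
  also have "{j. j < n \<and> n \<le> j + u} = {n - u..<n}" using assms by auto
  finally show ?thesis using assms by simp
qed

lemma prod_omega:
  fixes z :: "'a::field"
  assumes "u < n"
  shows "(\<Prod>j<n. omega_vec n z u j u) = z ^ (u * u)"
proof -
  have "(\<Prod>j<n. omega_vec n z u j u) = (\<Prod>j<n. z ^ (u * ((j + u) div n)))"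
    by (simp add: omega_simp)
  also have "\<dots> = z ^ (\<Sum>j<n. u * ((j + u) div n))" by (simp add: power_sum)
  also have "(\<Sum>j<n. u * ((j + u) div n)) = u * u"
    using card_carry[OF assms] by (simp add: sum_distrib_left[symmetric])
  finally show ?thesis .
qed

lemma double_mod_self: fixes x n :: nat assumes "x < n" "(x + x) mod n = x" shows "x = 0"
proof -
  have "x + x = n * ((x + x) div n) + x" using assms(2) by (metis div_mult_mod_eq mult.commute)
  then have "x = n * ((x + x) div n)" by simp
  with assms(1) show ?thesis by (metis less_mult_imp_div_less mult.commute nonzero_mult_div_cancel_left not_less_zero zero_less_iff_neq_zero div_less)
qed

lemma bij_succ_mod: assumes "n > 0" shows "bij_betw (\<lambda>j. (1 + j) mod n) {..<n::nat} {..<n}"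
proof -
  have inj: "inj_on (\<lambda>j. (1 + j) mod n) {..<n}"
  proof (rule inj_onI)
    fix a b assume a: "a \<in> {..<n}" and b: "b \<in> {..<n}" and e: "(1 + a) mod n = (1 + b) mod n"
    then have "[1 + a = 1 + b] (mod n)" by (simp add: cong_def)
    then have "[a = b] (mod n)" by (meson cong_add_lcancel_nat)
    then show "a = b" using a b by (simp add: cong_def)
  qed
  have "(\<lambda>j. (1 + j) mod n) ` {..<n} = {..<n}"
    by (rule endo_inj_surj) (use inj assms in auto)
  with inj show ?thesis by (simp add: bij_betw_def)
qed

lemma mod_coprime: fixes u i n :: nat assumes "n \<ge> 2" "(u * i) mod n = 1" shows "coprime u n"
proof -
  have "[u * i = 1] (mod n)" using assms by (simp add: cong_def)
  then have "coprime (u * i) n" using cong_imp_coprime[of 1 "u*i" n] by (simp add: cong_sym)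
  then show ?thesis by simp
qed

lemma necessity:
  fixes z z' :: "'k::field"
  assumes n: "n \<ge> 2" and E: "vec_monoidal_equiv n z z'"
  shows "\<exists>u. coprime u n \<and> z = z' ^ (u * u)"
proof -
  from E obtain \<sigma> \<mu> \<phi> where bij: "bij_betw \<sigma> {..<n} {..<n}"
    and add: "\<forall>i<n. \<forall>j<n. \<sigma> ((i + j) mod n) = (\<sigma> i + \<sigma> j) mod n"
    and mu: "\<forall>i<n. \<forall>j<n. \<mu> i j \<noteq> 0"
    and hex: "\<forall>i<n. \<forall>j<n. \<forall>k<n. omega_vec n z i j k * \<mu> ((i + j) mod n) k * \<mu> i j
          = \<mu> i ((j + k) mod n) * \<mu> j k * omega_vec n z' (\<sigma> i) (\<sigma> j) (\<sigma> k)"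
    unfolding vec_monoidal_equiv_def by blast
  define u where "u = \<sigma> 1"
  have sig_lt: "\<sigma> i < n" if "i < n" for i using bij that unfolding bij_betw_def by auto
  have u_lt: "u < n" using sig_lt n unfolding u_def by auto
  have s0: "\<sigma> 0 = 0"
    using add[rule_format, of 0 0] n sig_lt[of 0] double_mod_self[of "\<sigma> 0" n] by auto
  have sig: "\<sigma> i = (u * i) mod n" if "i < n" for i
    using that
  proof (induction i)
    case 0 then show ?case using s0 by simp
  next
    case (Suc i)
    have "\<sigma> (Suc i) = (\<sigma> i + \<sigma> 1) mod n" using add[rule_format, of i 1] Suc.prems n by simp
    also have "\<dots> = ((u * i) mod n + u) mod n" using Suc by (simp add: u_def)
    also have "\<dots> = (u * Suc i) mod n" by (simp add: mod_add_right_eq add.commute)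
    finally show ?case .
  qed
  have "1 \<in> \<sigma> ` {..<n}" using bij n unfolding bij_betw_def by auto
  then obtain i where "i < n" "\<sigma> i = 1" by auto
  then have cop: "coprime u n" using sig mod_coprime[OF n, of u i] by auto
  have hex1: "omega_vec n z 1 j 1 * \<mu> ((1 + j) mod n) 1 * \<mu> 1 j
          = \<mu> 1 ((j + 1) mod n) * \<mu> j 1 * omega_vec n z' u (\<sigma> j) u" if "j < n" for j
    using hex[rule_format, of 1 j 1] that n unfolding u_def by (simp add: add.commute)
  have "(\<Prod>j<n. omega_vec n z 1 j 1 * \<mu> ((1 + j) mod n) 1 * \<mu> 1 j)
      = (\<Prod>j<n. \<mu> 1 ((j + 1) mod n) * \<mu> j 1 * omega_vec n z' u (\<sigma> j) u)"
    using hex1 by (intro prod.cong) auto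
  then have eq: "(\<Prod>j<n. omega_vec n z 1 j 1) * (\<Prod>j<n. \<mu> ((1 + j) mod n) 1) * (\<Prod>j<n. \<mu> 1 j)
      = (\<Prod>j<n. \<mu> 1 ((1 + j) mod n)) * (\<Prod>j<n. \<mu> j 1) * (\<Prod>j<n. omega_vec n z' u (\<sigma> j) u)"
    by (simp add: prod.distrib add.commute)
  have r1: "(\<Prod>j<n. \<mu> ((1 + j) mod n) 1) = (\<Prod>j<n. \<mu> j 1)"
    using prod.reindex_bij_betw[OF bij_succ_mod, of n "\<lambda>j. \<mu> j 1"] n by simp
  have r2: "(\<Prod>j<n. \<mu> 1 ((1 + j) mod n)) = (\<Prod>j<n. \<mu> 1 j)"
    using prod.reindex_bij_betw[OF bij_succ_mod, of n "\<lambda>j. \<mu> 1 j"] n by simp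
  have r3: "(\<Prod>j<n. omega_vec n z' u (\<sigma> j) u) = (\<Prod>j<n. omega_vec n z' u j u)"
    using prod.reindex_bij_betw[OF bij, of "\<lambda>j. omega_vec n z' u j u"] by simp
  have nz: "(\<Prod>j<n. \<mu> j 1) * (\<Prod>j<n. \<mu> 1 j) \<noteq> 0"
    using mu n by (simp add: prod_zero_iff)
  have "(\<Prod>j<n. omega_vec n z 1 j 1) = (\<Prod>j<n. omega_vec n z' u j u)"
    using eq nz unfolding r1 r2 r3 by (simp add: algebra_simps)
  then have "z ^ (1 * 1) = z' ^ (u * u)"
    using prod_omega[of 1 n z] prod_omega[OF u_lt, of z'] n by simp
  then show ?thesis using cop by auto
qed

lemma bij_mult_mod: assumes "n > 0" "coprime u n" shows "bij_betw (\<lambda>i. (u * i) mod n) {..<n::nat} {..<n}"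
proof -
  have inj: "inj_on (\<lambda>i. (u * i) mod n) {..<n}"
  proof (rule inj_onI)
    fix a b assume a: "a \<in> {..<n}" and b: "b \<in> {..<n}" and e: "(u * a) mod n = (u * b) mod n"
    then have "[u * a = u * b] (mod n)" by (simp add: cong_def)
    then have "[a = b] (mod n)" using cong_mult_lcancel_nat assms(2) by blast
    then show "a = b" using a b by (simp add: cong_def)
  qed
  have "(\<lambda>i. (u * i) mod n) ` {..<n} = {..<n}"
    by (rule endo_inj_surj) (use inj assms in auto)
  with inj show ?thesis by (simp add: bij_betw_def)
qed

lemma alg1: "\<lbrakk>u * j = B + n * qj; u * k = C + n * qk; u * rjk = R' + n * qjk;
      B + C = R' + n * c'; j + k = rjk + n * c\<rbrakk>
     \<Longrightarrow> n * c' = n * (u * c - qj - qk + qjk)" for u j B n qj k C qk rjk R' qjk c' c :: int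
  by (Groebner_Basis.algebra)

lemma alg2: "\<lbrakk>c' = u * c - qj - qk + qjk; u * i = A + n * qi; i + j = rij + n * cij\<rbrakk> \<Longrightarrow>
  (u * u * (i * c) + (n - 1) * u * (rij * qk) + (n - 1) * u * (i * qj)) -
  ((n - 1) * u * (i * qjk) + (n - 1) * u * (j * qk) + A * c')
  = n * (u * i * qk - (n - 1) * u * cij * qk + u * i * qj - u * i * qjk + qi * c')"
  for u c qj qk qjk i A n qi j rij cij c' :: int
  by (Groebner_Basis.algebra)

lemma hex_exponent:
  fixes n u i j k :: nat
  assumes n: "n \<ge> 1"
  defines "L \<equiv> u * u * (i * ((j + k) div n)) + (n - 1) * u * (((i + j) mod n) * ((u * k) div n))
               + (n - 1) * u * (i * ((u * j) div n))"
  defines "R \<equiv> (n - 1) * u * (i * ((u * ((j + k) mod n)) div n)) + (n - 1) * u * (j * ((u * k) div n))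
               + ((u * i) mod n) * (((u * j) mod n + (u * k) mod n) div n)"
  shows "[L = R] (mod n)"
proof -
  define c where "c = (j + k) div n"
  define rjk where "rjk = (j + k) mod n"
  define A where "A = (u * i) mod n"
  define qi where "qi = (u * i) div n"
  define B where "B = (u * j) mod n"
  define qj where "qj = (u * j) div n"
  define C where "C = (u * k) mod n"
  define qk where "qk = (u * k) div n"
  define qjk where "qjk = (u * rjk) div n"
  define R' where "R' = (u * rjk) mod n"
  define c' where "c' = (B + C) div n"
  define R'' where "R'' = (B + C) mod n"
  define rij where "rij = (i + j) mod n"
  define cij where "cij = (i + j) div n"
  have e1: "u * i = A + n * qi" unfolding A_def qi_def by simp
  have e2: "j + k = rjk + n * c" unfolding rjk_def c_def by simp
  have e3: "u * j = B + n * qj" unfolding B_def qj_def by simp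
  have e4: "u * k = C + n * qk" unfolding C_def qk_def by simp
  have e5: "u * rjk = R' + n * qjk" unfolding R'_def qjk_def by simp
  have e6: "B + C = R'' + n * c'" unfolding R''_def c'_def by simp
  have e7: "i + j = rij + n * cij" unfolding rij_def cij_def by simp
  have e8: "R'' = R'"
  proof -
    have "R'' = (u * j + u * k) mod n" unfolding R''_def B_def C_def by (simp add: mod_add_eq)
    also have "\<dots> = (u * (j + k)) mod n" by (simp add: distrib_left)
    also have "\<dots> = (u * rjk) mod n" unfolding rjk_def by (simp add: mod_mult_right_eq)
    finally show ?thesis unfolding R'_def .
  qed
  have i1: "int n * int c' = int n * (int u * int c - int qj - int qk + int qjk)"
  proof -
    have "int u * int j = int B + int n * int qj" using e3 by (metis of_nat_add of_nat_mult)
    moreover have "int u * int k = int C + int n * int qk" using e4 by (metis of_nat_add of_nat_mult)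
    moreover have "int u * int rjk = int R' + int n * int qjk" using e5 by (metis of_nat_add of_nat_mult)
    moreover have "int B + int C = int R' + int n * int c'" using e6 e8 by (metis of_nat_add of_nat_mult)
    moreover have "int j + int k = int rjk + int n * int c" using e2 by (metis of_nat_add of_nat_mult)
    ultimately show ?thesis by (rule alg1)
  qed
  have i2: "int c' = int u * int c - int qj - int qk + int qjk" using i1 n by simp
  have i3: "int u * int i = int A + int n * int qi" using e1 by (metis of_nat_add of_nat_mult)
  have i4: "int i + int j = int rij + int n * int cij" using e7 by (metis of_nat_add of_nat_mult)
  have nm1: "int (n - 1) = int n - 1" using n by simp
  have LR: "int L = int u * int u * (int i * int c) + (int n - 1) * int u * (int rij * int qk)
               + (int n - 1) * int u * (int i * int qj)"
    unfolding L_def c_def rij_def qk_def qj_def using nm1 by simp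
  have RR: "int R = (int n - 1) * int u * (int i * int qjk) + (int n - 1) * int u * (int j * int qk)
               + int A * int c'"
    unfolding R_def qjk_def rjk_def qk_def A_def c'_def B_def C_def using nm1 by simp
  have "int L - int R = int n * (int u * int i * int qk - (int n - 1) * int u * int cij * int qk
        + int u * int i * int qj - int u * int i * int qjk + int qi * int c')"
    unfolding LR RR using alg2[OF i2 i3 i4] .
  then have "[int L = int R] (mod int n)" by (simp add: cong_iff_dvd_diff)
  then show ?thesis by (simp add: cong_int_iff)
qed

lemma sufficiency:
  fixes z z' :: "'k::field"
  assumes n: "n \<ge> 2" and z': "z' ^ n = 1" and u: "coprime u n" and z: "z = z' ^ (u * u)"
  shows "vec_monoidal_equiv n z z'"
proof -
  define \<eta> where "\<eta> = z' ^ ((n - 1) * u)"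
  define \<sigma> where "\<sigma> = (\<lambda>i. (u * i) mod n)"
  define \<mu> where "\<mu> = (\<lambda>i j. \<eta> ^ (i * ((u * j) div n)))"
  have z'nz: "z' \<noteq> 0" proof
    assume "z' = 0" then have "z' ^ n = 0" using n by simp
    then show False using z' by simp
  qed
  have bij: "bij_betw \<sigma> {..<n} {..<n}" unfolding \<sigma>_def using bij_mult_mod[of n u] n u by simp
  have add: "\<forall>i<n. \<forall>j<n. \<sigma> ((i + j) mod n) = (\<sigma> i + \<sigma> j) mod n"
    unfolding \<sigma>_def by (metis mod_add_eq mod_mult_right_eq distrib_left)
  have munz: "\<forall>i<n. \<forall>j<n. \<mu> i j \<noteq> 0" unfolding \<mu>_def \<eta>_def using z'nz by simp
  have hex: "omega_vec n z i j k * \<mu> ((i + j) mod n) k * \<mu> i j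
          = \<mu> i ((j + k) mod n) * \<mu> j k * omega_vec n z' (\<sigma> i) (\<sigma> j) (\<sigma> k)" for i j k
  proof -
    have "omega_vec n z i j k * \<mu> ((i + j) mod n) k * \<mu> i j =
      z' ^ (u * u * (i * ((j + k) div n)) + (n - 1) * u * (((i + j) mod n) * ((u * k) div n))
               + (n - 1) * u * (i * ((u * j) div n)))"
      unfolding omega_simp \<mu>_def \<eta>_def z by (simp only: power_add power_mult)
    also have "\<dots> = z' ^ ((n - 1) * u * (i * ((u * ((j + k) mod n)) div n)) + (n - 1) * u * (j * ((u * k) div n))
               + ((u * i) mod n) * (((u * j) mod n + (u * k) mod n) div n))"
      by (rule pow_cong_root[OF z' hex_exponent]) (use n in simp)
    also have "\<dots> = \<mu> i ((j + k) mod n) * \<mu> j k * omega_vec n z' (\<sigma> i) (\<sigma> j) (\<sigma> k)"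
      unfolding omega_simp \<mu>_def \<eta>_def \<sigma>_def by (simp only: power_add power_mult)
    finally show ?thesis .
  qed
  show ?thesis unfolding vec_monoidal_equiv_def
    apply (rule exI[of _ \<sigma>], rule exI[of _ \<mu>], rule exI[of _ 1])
    using bij add munz hex by (simp add: \<mu>_def)
qed

definition prim :: "nat \<Rightarrow> 'a::field \<Rightarrow> bool" where
  "prim n g \<longleftrightarrow> (\<forall>a. g ^ a = 1 \<longleftrightarrow> n dvd a)"

lemma pow_gcd_one:
  fixes x :: "'a::field"
  assumes "x ^ a = 1" "x ^ b = 1" shows "x ^ (gcd a b) = 1"
proof (cases "a = 0")
  case True then show ?thesis using assms by simp
next
  case False
  then obtain s t where st: "a * s = b * t + gcd a b" using bezout_nat by blast
  have "1 = x ^ (a * s)" by (simp add: power_mult assms)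
  also have "\<dots> = x ^ (b * t) * x ^ gcd a b" by (simp add: st power_add)
  also have "\<dots> = x ^ gcd a b" by (simp add: power_mult assms)
  finally show ?thesis by simp
qed

lemma prim_one: "prim 1 (1::'a::field)" unfolding prim_def by simp

lemma prim_mult:
  fixes g h :: "'a::field"
  assumes g: "prim m g" and h: "prim n h" and cop: "coprime m n"
  shows "prim (m * n) (g * h)"
  unfolding prim_def
proof (intro allI iffI)
  fix a assume a: "(g * h) ^ a = 1"
  have "(g * h) ^ (a * m) = 1" using a by (simp add: power_mult)
  moreover have "g ^ (a * m) = 1" using g unfolding prim_def by simp
  ultimately have "h ^ (a * m) = 1" by (simp add: power_mult_distrib)
  then have "n dvd a * m" using h unfolding prim_def by simp
  then have nd: "n dvd a" using cop by (metis coprime_commute coprime_dvd_mult_left_iff)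
  have "(g * h) ^ (a * n) = 1" using a by (simp add: power_mult)
  moreover have "h ^ (a * n) = 1" using h unfolding prim_def by simp
  ultimately have "g ^ (a * n) = 1" by (simp add: power_mult_distrib)
  then have "m dvd a * n" using g unfolding prim_def by simp
  then have md: "m dvd a" using cop by (metis coprime_dvd_mult_left_iff)
  show "m * n dvd a" using md nd cop by (simp add: divides_mult)
next
  fix a assume "m * n dvd a"
  then have "m dvd a" "n dvd a" by (auto intro: dvd_mult_left dvd_mult_right)
  then have "g ^ a = 1" "h ^ a = 1" using g h unfolding prim_def by auto
  then show "(g * h) ^ a = 1" by (simp add: power_mult_distrib)
qed

lemma prim_prime_power:
  assumes p: "prime p" and k: "k \<ge> 1"
  shows "\<exists>g::'a::{alg_closed_field, field_char_0}. prim (p ^ k) g"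
proof -
  have p1: "p - 1 > 0" using prime_gt_1_nat[OF p] by simp
  obtain w :: 'a where w: "(\<Sum>i\<le>p - 1. 1 * w ^ i) = 0"
    using alg_closed[of "p - 1" "\<lambda>_. 1"] p1 by auto
  have pset: "{..p - 1} = {..<p}" using prime_gt_1_nat[OF p] by auto
  have ws: "(\<Sum>i<p. w ^ i) = 0" using w pset by simp
  have w1: "w \<noteq> 1"
  proof
    assume "w = 1" then have "(of_nat p :: 'a) = 0" using ws by simp
    then show False using p by simp
  qed
  have wp: "w ^ p = 1" using geometric_sum[OF w1, of p] ws w1 by (simp add: divide_eq_0_iff)
  obtain x :: 'a where x: "x ^ (p ^ (k - 1)) = w" using nth_root_exists[of "p ^ (k - 1)" w] prime_gt_0_nat[OF p]
    by auto
  have pk: "p ^ k = p ^ (k - 1) * p" using k by (cases k) (simp_all add: mult.commute)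
  have xpk: "x ^ (p ^ k) = 1" using x wp pk by (simp add: power_mult)
  have "prim (p ^ k) x" unfolding prim_def
  proof (intro allI iffI)
    fix a assume "x ^ a = 1"
    then have g1: "x ^ gcd a (p ^ k) = 1" using pow_gcd_one xpk by blast
    have "gcd a (p ^ k) dvd p ^ k" by simp
    then obtain j where j: "j \<le> k" "gcd a (p ^ k) = p ^ j" using divides_primepow_nat[OF p] by blast
    show "p ^ k dvd a"
    proof (cases "j = k")
      case True then show ?thesis using j gcd_dvd1[of a "p ^ k"] by simp
    next
      case False
      then have "j \<le> k - 1" using j by simp
      then have "p ^ j dvd p ^ (k - 1)" by (simp add: le_imp_power_dvd)
      then obtain t where "p ^ (k - 1) = p ^ j * t" by blast
      then have "x ^ (p ^ (k - 1)) = 1" using g1 j by (simp add: power_mult)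
      then show ?thesis using x w1 by simp
    qed
  next
    fix a assume "p ^ k dvd a"
    then obtain t where "a = p ^ k * t" by blast
    then show "x ^ a = 1" using xpk by (simp add: power_mult)
  qed
  then show ?thesis by blast
qed


lemma prim_prod:
  fixes P :: "nat set"
  assumes "finite P" "\<forall>p\<in>P. prime p"
  shows "\<exists>g::'a::{alg_closed_field, field_char_0}. prim (\<Prod>p\<in>P. p ^ e p) g"
  using assms
proof (induction P rule: finite_induct)
  case empty then show ?case using prim_one by auto
next
  case (insert p P)
  then obtain h :: 'a where h: "prim (\<Prod>p\<in>P. p ^ e p) h" by auto
  have pp: "prime p" using insert by auto
  obtain g :: 'a where g: "prim (p ^ e p) g"
  proof (cases "e p = 0")
    case True then show ?thesis using that[of 1] prim_one by simp
  next
    case False then show ?thesis using that prim_prime_power[OF pp, of "e p"] by auto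
  qed
  have cop: "coprime (p ^ e p) (\<Prod>p\<in>P. p ^ e p)"
  proof (rule prod_coprime_right)
    fix q assume "q \<in> P"
    then have "coprime p q" using insert pp primes_coprime[of p q] by auto
    then show "coprime (p ^ e p) (q ^ e q)" by simp
  qed
  have "prim (p ^ e p * (\<Prod>p\<in>P. p ^ e p)) (g * h)" by (rule prim_mult[OF g h cop])
  then show ?case using insert by (auto simp: prod.insert)
qed

lemma prim_exists:
  assumes "n \<ge> 1"
  shows "\<exists>g::'a::{alg_closed_field, field_char_0}. prim n g"
proof -
  have "n = (\<Prod>p\<in>prime_factors n. p ^ multiplicity p n)" using assms prime_factorization_nat by auto
  moreover have "\<exists>g::'a. prim (\<Prod>p\<in>prime_factors n. p ^ multiplicity p n) g"
    by (rule prim_prod) auto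
  ultimately show ?thesis by simp
qed

lemma prim_pow_eq:
  fixes g :: "'a::field"
  assumes g: "prim n g" and n: "n \<ge> 1"
  shows "g ^ a = g ^ b \<longleftrightarrow> [a = b] (mod n)"
proof -
  have gn: "g ^ n = 1" using g unfolding prim_def by simp
  have gnz: "g \<noteq> 0"
  proof
    assume "g = 0" then have "g ^ n = 0" using n by simp
    then show False using gn by simp
  qed
  have key: "g ^ a = g ^ b \<longleftrightarrow> [a = b] (mod n)" if ab: "a \<le> b" for a b
  proof -
    have "g ^ b = g ^ a * g ^ (b - a)" using ab by (simp add: power_add[symmetric])
    then have "g ^ a = g ^ b \<longleftrightarrow> g ^ (b - a) = 1" using gnz by auto
    also have "\<dots> \<longleftrightarrow> n dvd b - a" using g unfolding prim_def by simp
    also have "\<dots> \<longleftrightarrow> [a = b] (mod n)" using ab using cong_altdef_nat[of a b n] cong_altdef_nat[of b a n] by (simp add: cong_sym_eq)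
    finally show ?thesis .
  qed
  show ?thesis
  proof (cases "a \<le> b")
    case True then show ?thesis using key by simp
  next
    case False then show ?thesis using key[of b a] by (auto simp: cong_sym_eq)
  qed
qed

lemma prim_roots:
  fixes g :: "'a::field"
  assumes g: "prim n g" and n: "n \<ge> 1"
  shows "{z. z ^ n = 1} = (\<lambda>a. g ^ a) ` {..<n}" and "inj_on (\<lambda>a. g ^ a) {..<n}"
proof -
  show inj: "inj_on (\<lambda>a. g ^ a) {..<n}"
    by (rule inj_onI) (simp add: prim_pow_eq[OF g n] cong_def)
  have sub: "(\<lambda>a. g ^ a) ` {..<n} \<subseteq> {z. z ^ n = 1}"
  proof
    fix z assume "z \<in> (\<lambda>a. g ^ a) ` {..<n}"
    then obtain a where "z = g ^ a" by auto
    moreover have "g ^ n = 1" using g unfolding prim_def by simp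
    moreover have "(g ^ a) ^ n = (g ^ n) ^ a" by (metis power_mult mult.commute)
    ultimately show "z \<in> {z. z ^ n = 1}" by simp
  qed
  define P :: "'a poly" where "P = Polynomial.monom 1 n + [:-1:]"
  have polyP: "poly P z = z ^ n - 1" for z unfolding P_def by (simp add: poly_monom)
  have degP: "degree P = n" unfolding P_def using n by (subst degree_add_eq_left) (simp_all add: degree_monom_eq)
  have P0: "P \<noteq> 0" using degP n by auto
  have roots: "{z. z ^ n = 1} = {z. poly P z = 0}" by (simp add: polyP)
  have fin: "finite {z. z ^ n = (1::'a)}" unfolding roots using poly_roots_finite[OF P0] .
  have "card {z. z ^ n = (1::'a)} \<le> n" unfolding roots using card_poly_roots_bound[OF P0] degP by simp
  also have "n = card ((\<lambda>a. g ^ a) ` {..<n})" using card_image[OF inj] by simp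
  finally show "{z. z ^ n = 1} = (\<lambda>a. g ^ a) ` {..<n}"
    using card_seteq[OF fin sub] by simp
qed

lemma card_quotient_bij:
  assumes f: "bij_betw f A B" and R: "R \<subseteq> A \<times> A" and E: "E \<subseteq> B \<times> B"
    and iff: "\<And>a b. a \<in> A \<Longrightarrow> b \<in> A \<Longrightarrow> (a, b) \<in> R \<longleftrightarrow> (f a, f b) \<in> E"
  shows "card (A // R) = card (B // E)"
proof -
  have inj: "inj_on f A" and B: "B = f ` A" using f by (auto simp: bij_betw_def)
  have cls: "f ` (R `` {a}) = E `` {f a}" if a: "a \<in> A" for a
  proof
    show "f ` (R `` {a}) \<subseteq> E `` {f a}" using R iff a by auto
    show "E `` {f a} \<subseteq> f ` (R `` {a})"
    proof
      fix y assume "y \<in> E `` {f a}"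
      then have y: "(f a, y) \<in> E" by auto
      then have "y \<in> B" using E by auto
      then obtain b where b: "b \<in> A" "y = f b" using B by auto
      then have "(a, b) \<in> R" using iff a y by auto
      then show "y \<in> f ` (R `` {a})" using b by auto
    qed
  qed
  have "B // E = (\<lambda>X. f ` X) ` (A // R)"
    unfolding quotient_def B using cls by auto
  moreover have "inj_on (\<lambda>X. f ` X) (A // R)"
  proof (rule inj_onI)
    fix X Y assume X: "X \<in> A // R" and Y: "Y \<in> A // R" and e: "f ` X = f ` Y"
    have "X \<subseteq> A" "Y \<subseteq> A" using X Y R unfolding quotient_def by auto
    then show "X = Y" using e inj inj_on_image_eq_iff by metis
  qed
  ultimately show ?thesis by (simp add: card_image)
qed

lemma card_quotient_prod:
  assumes R: "equiv A R" and S: "equiv B S"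
  shows "card ((A \<times> B) // {((a1, a2), (b1, b2)). (a1, b1) \<in> R \<and> (a2, b2) \<in> S}) = card (A // R) * card (B // S)"
proof -
  let ?P = "{((a1, a2), (b1, b2)). (a1, b1) \<in> R \<and> (a2, b2) \<in> S}"
  have cls: "?P `` {(a, b)} = R `` {a} \<times> S `` {b}" for a b by auto
  have "(A \<times> B) // ?P = (\<lambda>(X, Y). X \<times> Y) ` (A // R \<times> B // S)"
    unfolding quotient_def using cls by (auto simp: image_iff) (metis cls)+
  moreover have "inj_on (\<lambda>(X, Y). X \<times> Y) (A // R \<times> B // S)"
  proof (rule inj_onI, clarify)
    fix X Y X' Y' assume "X \<in> A // R" "Y \<in> B // S" "X' \<in> A // R" "Y' \<in> B // S" "X \<times> Y = X' \<times> Y'"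
    moreover have "X \<noteq> {}" "Y \<noteq> {}" "X' \<noteq> {}" "Y' \<noteq> {}"
      using calculation in_quotient_imp_non_empty R S by metis+
    ultimately show "X = X' \<and> Y = Y'" by (simp add: times_eq_iff)
  qed
  ultimately show ?thesis by (simp add: card_image card_cartesian_product)
qed

lemma card_quotient_split:
  assumes R: "R \<subseteq> (A \<times> A) \<union> (B \<times> B)" and disj: "A \<inter> B = {}"
    and refl: "\<And>x. x \<in> A \<union> B \<Longrightarrow> (x, x) \<in> R" and fin: "finite A" "finite B"
  shows "card ((A \<union> B) // R) = card (A // (R \<inter> A \<times> A)) + card (B // (R \<inter> B \<times> B))"
proof -
  have clA: "R `` {a} = (R \<inter> A \<times> A) `` {a}" if "a \<in> A" for a using that R disj by blast
  have clB: "R `` {a} = (R \<inter> B \<times> B) `` {a}" if "a \<in> B" for a using that R disj by blast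
  have eq: "(A \<union> B) // R = A // (R \<inter> A \<times> A) \<union> B // (R \<inter> B \<times> B)"
    unfolding quotient_def using clA clB by blast
  have d: "A // (R \<inter> A \<times> A) \<inter> B // (R \<inter> B \<times> B) = {}"
  proof (rule ccontr)
    assume "A // (R \<inter> A \<times> A) \<inter> B // (R \<inter> B \<times> B) \<noteq> {}"
    then obtain X where X1: "X \<in> A // (R \<inter> A \<times> A)" and X2: "X \<in> B // (R \<inter> B \<times> B)" by blast
    from X1 obtain a where a: "a \<in> A" "X = (R \<inter> A \<times> A) `` {a}" unfolding quotient_def by blast
    then have "a \<in> X" using refl by auto
    moreover have "X \<subseteq> B" using X2 unfolding quotient_def by blast
    ultimately show False using a disj by blast
  qed
  have f1: "finite (A // (R \<inter> A \<times> A))" by (rule finite_quotient) (use fin in auto)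
  have f2: "finite (B // (R \<inter> B \<times> B))" by (rule finite_quotient) (use fin in auto)
  show ?thesis unfolding eq using card_Un_disjoint[OF f1 f2 d] .
qed

definition Rel :: "nat \<Rightarrow> (nat \<times> nat) set" where
  "Rel n = {(a, b). a < n \<and> b < n \<and> (\<exists>u. coprime u n \<and> [a = u * u * b] (mod n))}"

definition NN :: "nat \<Rightarrow> nat" where "NN n = card ({..<n} // Rel n)"

lemma Rel_equiv: "equiv {..<n} (Rel n)"
proof (rule equivI)
  show "Rel n \<subseteq> {..<n} \<times> {..<n}" unfolding Rel_def by auto
  show "refl_on {..<n} (Rel n)" unfolding refl_on_def Rel_def
    by (auto intro!: exI[of _ 1])
  show "sym (Rel n)" unfolding sym_def
  proof (intro allI impI)
    fix a b assume "(a, b) \<in> Rel n"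
    then obtain u where ab: "a < n" "b < n" "coprime u n" "[a = u * u * b] (mod n)" unfolding Rel_def by auto
    obtain v where v: "[u * v = 1] (mod n)" using cong_solve_coprime_nat[OF ab(3)] by auto
    have cv: "coprime v n" using v cong_imp_coprime[of 1 "u * v" n] by (simp add: cong_sym_eq)
    have "[v * v * a = v * v * (u * u * b)] (mod n)" using ab(4) by (simp add: cong_scalar_left)
    moreover have "v * v * (u * u * b) = (u * v) * (u * v) * b" by (simp add: algebra_simps)
    moreover have "[(u * v) * (u * v) * b = 1 * 1 * b] (mod n)" using v by (intro cong_mult cong_refl)
    ultimately have "[v * v * a = b] (mod n)" by (metis cong_trans mult_1)
    then show "(b, a) \<in> Rel n" using ab cv unfolding Rel_def by (auto simp: cong_sym_eq)
  qed
  show "trans (Rel n)" unfolding trans_def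
  proof (intro allI impI)
    fix a b c assume "(a, b) \<in> Rel n" "(b, c) \<in> Rel n"
    then obtain u w where h: "a < n" "b < n" "c < n" "coprime u n" "[a = u * u * b] (mod n)"
      "coprime w n" "[b = w * w * c] (mod n)" unfolding Rel_def by auto
    have "[u * u * b = u * u * (w * w * c)] (mod n)" using h(7) by (simp add: cong_scalar_left)
    then have "[a = (u * w) * (u * w) * c] (mod n)" using h(5) by (metis cong_trans mult.assoc mult.left_commute)
    moreover have "coprime (u * w) n" using h by simp
    ultimately show "(a, c) \<in> Rel n" using h unfolding Rel_def by blast
  qed
qed

lemma Rel_sub: "Rel n \<subseteq> {..<n} \<times> {..<n}" unfolding Rel_def by auto

lemma NN_one: "NN 1 = 1"
proof -
  have "{..<1::nat} // Rel 1 = {Rel 1 `` {0}}" unfolding quotient_def by auto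
  then show ?thesis unfolding NN_def by simp
qed

lemma NN_mult:
  assumes cop: "coprime m1 m2" and m1: "m1 \<ge> 1" and m2: "m2 \<ge> 1"
  shows "NN (m1 * m2) = NN m1 * NN m2"
proof -
  define f where "f = (\<lambda>x. (x mod m1, x mod m2))"
  have inj: "inj_on f {..<m1 * m2}"
  proof (rule inj_onI)
    fix x y assume x: "x \<in> {..<m1 * m2}" and y: "y \<in> {..<m1 * m2}" and e: "f x = f y"
    then have "[x = y] (mod m1)" "[x = y] (mod m2)" unfolding f_def by (auto simp: cong_def)
    then have "[x = y] (mod m1 * m2)" using coprime_cong_mult_nat cop by blast
    then show "x = y" using x y by (simp add: cong_def)
  qed
  have sub: "f ` {..<m1 * m2} \<subseteq> {..<m1} \<times> {..<m2}" unfolding f_def using m1 m2 by auto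
  have "card (f ` {..<m1 * m2}) = card ({..<m1} \<times> {..<m2})"
    using card_image[OF inj] by (simp add: card_cartesian_product)
  then have img: "f ` {..<m1 * m2} = {..<m1} \<times> {..<m2}"
    using card_subset_eq[OF _ sub] by simp
  have bij: "bij_betw f {..<m1 * m2} ({..<m1} \<times> {..<m2})"
    using inj img by (simp add: bij_betw_def)
  let ?P = "{((a1, a2), (b1, b2)). (a1, b1) \<in> Rel m1 \<and> (a2, b2) \<in> Rel m2}"
  have iff: "(x, y) \<in> Rel (m1 * m2) \<longleftrightarrow> (f x, f y) \<in> ?P"
    if x: "x \<in> {..<m1 * m2}" and y: "y \<in> {..<m1 * m2}" for x y
  proof
    assume "(x, y) \<in> Rel (m1 * m2)"
    then obtain u where u: "coprime u (m1 * m2)" "[x = u * u * y] (mod m1 * m2)" unfolding Rel_def by auto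
    have "[x = u * u * y] (mod m1)" "[x = u * u * y] (mod m2)"
      using u(2) cong_modulus_mult_nat[of x "u*u*y" m1 m2] cong_modulus_mult_nat[of x "u*u*y" m2 m1]
      by (auto simp: mult.commute)
    then have "[x mod m1 = u * u * (y mod m1)] (mod m1)" "[x mod m2 = u * u * (y mod m2)] (mod m2)"
      by (auto simp: cong_def mod_mult_right_eq)
    moreover have "coprime u m1" "coprime u m2" using u(1) by auto
    ultimately show "(f x, f y) \<in> ?P" unfolding f_def Rel_def using m1 m2 by auto
  next
    assume "(f x, f y) \<in> ?P"
    then obtain u1 u2 where u1: "coprime u1 m1" "[x mod m1 = u1 * u1 * (y mod m1)] (mod m1)"
      and u2: "coprime u2 m2" "[x mod m2 = u2 * u2 * (y mod m2)] (mod m2)"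
      unfolding f_def Rel_def by auto
    obtain u where u: "[u = u1] (mod m1)" "[u = u2] (mod m2)" using binary_chinese_remainder_nat[OF cop] by blast
    have cu1: "coprime u m1" using cong_imp_coprime[OF cong_sym[OF u(1)] u1(1)] .
    have cu2: "coprime u m2" using cong_imp_coprime[OF cong_sym[OF u(2)] u2(1)] .
    have "[x = u1 * u1 * y] (mod m1)" using u1(2) by (auto simp: cong_def mod_mult_right_eq)
    moreover have "[u1 * u1 * y = u * u * y] (mod m1)" using u(1) by (intro cong_mult cong_refl) (auto simp: cong_sym)
    ultimately have c1: "[x = u * u * y] (mod m1)" by (rule cong_trans)
    have "[x = u2 * u2 * y] (mod m2)" using u2(2) by (auto simp: cong_def mod_mult_right_eq)
    moreover have "[u2 * u2 * y = u * u * y] (mod m2)" using u(2) by (intro cong_mult cong_refl) (auto simp: cong_sym)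
    ultimately have c2: "[x = u * u * y] (mod m2)" by (rule cong_trans)
    have "[x = u * u * y] (mod m1 * m2)" using coprime_cong_mult_nat[OF c1 c2 cop] .
    moreover have "coprime u (m1 * m2)" using cu1 cu2 by simp
    ultimately show "(x, y) \<in> Rel (m1 * m2)" using x y unfolding Rel_def by auto
  qed
  have "NN (m1 * m2) = card (({..<m1} \<times> {..<m2}) // ?P)"
    unfolding NN_def
  proof (rule card_quotient_bij[OF bij Rel_sub _ iff])
    show "?P \<subseteq> ({..<m1} \<times> {..<m2}) \<times> ({..<m1} \<times> {..<m2})" using Rel_sub by blast
  qed auto
  also have "\<dots> = NN m1 * NN m2" unfolding NN_def by (rule card_quotient_prod[OF Rel_equiv Rel_equiv])
  finally show ?thesis .
qed

lemma sq1_coprime: fixes x q :: nat assumes "[x * x = 1] (mod q)" shows "coprime x q"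
proof -
  have "coprime (x * x) q" using cong_imp_coprime[OF cong_sym[OF assms]] by simp
  then show ?thesis by simp
qed

lemma units_classes:
  fixes q :: nat
  assumes q: "q \<ge> 2"
  defines "U \<equiv> {a. a < q \<and> coprime a q}"
  shows "card (U // (Rel q \<inter> U \<times> U)) = card {x. x < q \<and> [x * x = 1] (mod q)}"
proof -
  define RU where "RU = Rel q \<inter> U \<times> U"
  define sq where "sq = (\<lambda>v. (v * v) mod q)"
  define Sq where "Sq = sq ` U"
  define K where "K = {x. x < q \<and> [x * x = 1] (mod q)}"
  have finU: "finite U" unfolding U_def by auto
  have KU: "K \<subseteq> U" unfolding K_def U_def using sq1_coprime by auto
  have finK: "finite K" using KU finU finite_subset by auto
  have finSq: "finite Sq" unfolding Sq_def using finU by auto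
  have oneU: "1 \<in> U" unfolding U_def using q by auto
  have Sq_ne: "card Sq > 0" using finSq oneU unfolding Sq_def by (auto simp: card_gt_0_iff)
  have symR: "(a, b) \<in> Rel q \<Longrightarrow> (b, a) \<in> Rel q" for a b
    using Rel_equiv[of q] unfolding equiv_def sym_def by blast
  have modU: "x mod q \<in> U" if "coprime x q" for x unfolding U_def using that q by auto
  have eqmod: "a = b" if "[a = b] (mod q)" "a < q" "b < q" for a b using that by (simp add: cong_def)
  have cls: "RU `` {y} = (\<lambda>s. (s * y) mod q) ` Sq" if y: "y \<in> U" for y
  proof
    show "RU `` {y} \<subseteq> (\<lambda>s. (s * y) mod q) ` Sq"
    proof
      fix a assume "a \<in> RU `` {y}"
      then have ya: "(y, a) \<in> Rel q" and aU: "a \<in> U" unfolding RU_def by auto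
      have "(a, y) \<in> Rel q" using ya by (rule symR)
      then obtain u where u: "coprime u q" "[a = u * u * y] (mod q)" unfolding Rel_def by auto
      have "[u * u * y = sq (u mod q) * y] (mod q)" unfolding sq_def
        by (simp add: cong_def mod_mult_left_eq mod_mult_right_eq mult.assoc)
      then have "[a = sq (u mod q) * y] (mod q)" using u(2) by (rule cong_trans[rotated])
      then have "a = (sq (u mod q) * y) mod q" using aU unfolding U_def by (simp add: cong_def)
      moreover have "sq (u mod q) \<in> Sq" unfolding Sq_def using modU[OF u(1)] by auto
      ultimately show "a \<in> (\<lambda>s. (s * y) mod q) ` Sq" by auto
    qed
    show "(\<lambda>s. (s * y) mod q) ` Sq \<subseteq> RU `` {y}"
    proof
      fix a assume "a \<in> (\<lambda>s. (s * y) mod q) ` Sq"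
      then obtain v where v: "v \<in> U" "a = (sq v * y) mod q" unfolding Sq_def by auto
      have "[a = v * v * y] (mod q)" unfolding v(2) sq_def by (simp add: cong_def mod_mult_left_eq)
      moreover have aU: "a \<in> U"
      proof -
        have "coprime (v * v * y) q" using v(1) y unfolding U_def by simp
        then have "(v * v * y) mod q \<in> U" by (rule modU)
        moreover have "a = (v * v * y) mod q" unfolding v(2) sq_def by (simp add: mod_mult_left_eq)
        ultimately show ?thesis by simp
      qed
      ultimately have "(a, y) \<in> Rel q" using v(1) y unfolding Rel_def U_def by auto
      then have "(y, a) \<in> Rel q" by (rule symR)
      then show "a \<in> RU `` {y}" unfolding RU_def using aU y by auto
    qed
  qed
  have cls_card: "card (RU `` {y}) = card Sq" if y: "y \<in> U" for y
  proof -
    have "inj_on (\<lambda>s. (s * y) mod q) Sq"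
    proof (rule inj_onI)
      fix s t assume s: "s \<in> Sq" and t: "t \<in> Sq" and e: "(s * y) mod q = (t * y) mod q"
      have "coprime y q" using y unfolding U_def by auto
      then have "[s = t] (mod q)" using e cong_mult_rcancel_nat unfolding cong_def by metis
      moreover have "s < q" "t < q" using s t q unfolding Sq_def sq_def by auto
      ultimately show "s = t" by (rule eqmod)
    qed
    then show ?thesis using cls[OF y] by (simp add: card_image)
  qed
  have eqU: "equiv U RU"
  proof -
    have "equiv {..<q} (Rel q)" by (rule Rel_equiv)
    moreover have "U \<subseteq> {..<q}" unfolding U_def by auto
    ultimately show ?thesis unfolding RU_def equiv_def refl_on_def sym_def trans_def by blast
  qed
  have part1: "card Sq * card (U // RU) = card U"
  proof -
    have "card Sq * card (U // RU) = card (\<Union> (U // RU))"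
    proof (rule card_partition)
      show "finite (U // RU)" using finU eqU by (simp add: finite_quotient equiv_type)
      show "finite (\<Union> (U // RU))" using Union_quotient[OF eqU] finU by simp
      show "card c = card Sq" if "c \<in> U // RU" for c
        using that cls_card unfolding quotient_def by auto
      show "c1 \<inter> c2 = {}" if "c1 \<in> U // RU" "c2 \<in> U // RU" "c1 \<noteq> c2" for c1 c2
        using quotient_disj[OF eqU] that by blast
    qed
    then show ?thesis using Union_quotient[OF eqU] by simp
  qed
  define F where "F = (\<lambda>s. {v \<in> U. sq v = s})"
  have fib: "F (sq v0) = (\<lambda>w. (v0 * w) mod q) ` K" if v0: "v0 \<in> U" for v0
  proof
    obtain t where t: "[v0 * t = 1] (mod q)" using cong_solve_coprime_nat[of v0 q] v0 unfolding U_def by auto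
    show "F (sq v0) \<subseteq> (\<lambda>w. (v0 * w) mod q) ` K"
    proof
      fix v assume "v \<in> F (sq v0)"
      then have v: "v \<in> U" "[v * v = v0 * v0] (mod q)" unfolding F_def sq_def by (auto simp: cong_def)
      define w where "w = (v * t) mod q"
      have wc: "[w = v * t] (mod q)" unfolding w_def by (simp add: cong_def)
      have "[w * w = (v * t) * (v * t)] (mod q)" using wc wc by (rule cong_mult)
      moreover have "(v * t) * (v * t) = (v * v) * (t * t)" by (simp add: algebra_simps)
      ultimately have "[w * w = (v * v) * (t * t)] (mod q)" by simp
      moreover have "[(v * v) * (t * t) = (v0 * v0) * (t * t)] (mod q)" using cong_mult[OF v(2) cong_refl] .
      moreover have "(v0 * v0) * (t * t) = (v0 * t) * (v0 * t)" by (simp add: algebra_simps)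
      moreover have "[(v0 * t) * (v0 * t) = 1 * 1] (mod q)" using t by (intro cong_mult)
      ultimately have "[w * w = 1] (mod q)" by (metis cong_trans mult_1)
      then have wK: "w \<in> K" unfolding K_def w_def using q by auto
      have "[v0 * w = v0 * (v * t)] (mod q)" using wc by (intro cong_mult cong_refl)
      moreover have "v0 * (v * t) = v * (v0 * t)" by (simp add: algebra_simps)
      ultimately have "[v0 * w = v * (v0 * t)] (mod q)" by simp
      moreover have "[v * (v0 * t) = v * 1] (mod q)" using t by (intro cong_mult cong_refl)
      ultimately have "[v0 * w = v] (mod q)" by (metis cong_trans mult_1_right)
      then have "(v0 * w) mod q = v" using v(1) unfolding U_def by (simp add: cong_def)
      then show "v \<in> (\<lambda>w. (v0 * w) mod q) ` K" using wK by force
    qed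
    show "(\<lambda>w. (v0 * w) mod q) ` K \<subseteq> F (sq v0)"
    proof
      fix v assume "v \<in> (\<lambda>w. (v0 * w) mod q) ` K"
      then obtain w where w: "w \<in> K" "v = (v0 * w) mod q" by auto
      have wc: "coprime w q" using w(1) KU unfolding U_def by auto
      have vU: "v \<in> U" unfolding w(2) using modU[of "v0 * w"] v0 wc unfolding U_def by simp
      have vc: "[v = v0 * w] (mod q)" unfolding w(2) by (simp add: cong_def)
      have "[v * v = (v0 * w) * (v0 * w)] (mod q)" using vc vc by (rule cong_mult)
      moreover have "(v0 * w) * (v0 * w) = (v0 * v0) * (w * w)" by (simp add: algebra_simps)
      ultimately have "[v * v = (v0 * v0) * (w * w)] (mod q)" by simp
      moreover have "[(v0 * v0) * (w * w) = (v0 * v0) * 1] (mod q)" using w(1) unfolding K_def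
        by (intro cong_mult cong_refl) auto
      ultimately have "[v * v = v0 * v0] (mod q)" by (metis cong_trans mult_1_right)
      then have "sq v = sq v0" unfolding sq_def by (simp add: cong_def)
      then show "v \<in> F (sq v0)" unfolding F_def using vU by auto
    qed
  qed
  have fib_card: "card (F s) = card K" if s: "s \<in> Sq" for s
  proof -
    obtain v0 where v0: "v0 \<in> U" "s = sq v0" using s unfolding Sq_def by auto
    have "inj_on (\<lambda>w. (v0 * w) mod q) K"
    proof (rule inj_onI)
      fix a b assume a: "a \<in> K" and b: "b \<in> K" and e: "(v0 * a) mod q = (v0 * b) mod q"
      have "coprime v0 q" using v0 unfolding U_def by auto
      then have "[a = b] (mod q)" using e cong_mult_lcancel_nat unfolding cong_def by metis
      moreover have "a < q" "b < q" using a b unfolding K_def by auto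
      ultimately show "a = b" by (rule eqmod)
    qed
    then show ?thesis using fib[OF v0(1)] v0(2) by (simp add: card_image)
  qed
  have part2: "card K * card Sq = card U"
  proof -
    have UF: "\<Union> (F ` Sq) = U" unfolding F_def Sq_def by auto
    have injF: "inj_on F Sq"
    proof (rule inj_onI)
      fix s t assume s: "s \<in> Sq" and t: "t \<in> Sq" and e: "F s = F t"
      obtain v where v: "v \<in> U" "s = sq v" using s unfolding Sq_def by auto
      then have "v \<in> F s" unfolding F_def by auto
      then have "v \<in> F t" using e by simp
      then show "s = t" using v unfolding F_def by auto
    qed
    have "card K * card (F ` Sq) = card (\<Union> (F ` Sq))"
    proof (rule card_partition)
      show "finite (F ` Sq)" using finSq by simp
      show "finite (\<Union> (F ` Sq))" using UF finU by simp
      show "card c = card K" if "c \<in> F ` Sq" for c using that fib_card by auto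
      show "c1 \<inter> c2 = {}" if "c1 \<in> F ` Sq" "c2 \<in> F ` Sq" "c1 \<noteq> c2" for c1 c2
        using that unfolding F_def by auto
    qed
    then show ?thesis using UF card_image[OF injF] by simp
  qed
  have "card Sq * card (U // RU) = card Sq * card K" using part1 part2 by (simp add: mult.commute)
  then show ?thesis using Sq_ne unfolding RU_def K_def by simp
qed

lemma cong_scale: fixes c a b m :: nat assumes "c > 0"
  shows "[c * a = c * b] (mod c * m) \<longleftrightarrow> [a = b] (mod m)"
  using assms by (simp add: cong_def mult_mod_right[symmetric])

lemma coprime_prime_power_iff: "prime (p::nat) \<Longrightarrow> coprime a (p ^ Suc k) \<longleftrightarrow> \<not> p dvd a"
  by (metis coprime_common_divisor_nat dvd_refl less_Suc_eq_0_disj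
    prime_dvd_power_nat_iff prime_imp_power_coprime prime_nat_iff'')

lemma NN_rec:
  assumes p: "prime p"
  shows "NN (p ^ Suc k) = NN (p ^ k) + card {x. x < p ^ Suc k \<and> [x * x = 1] (mod p ^ Suc k)}"
proof -
  define q where "q = p ^ Suc k"
  have p2: "p \<ge> 2" using prime_ge_2_nat[OF p] .
  have p0: "p > 0" using p2 by simp
  have pk1: "p ^ k \<ge> 1" using p0 by simp
  have qpk: "q = p * p ^ k" unfolding q_def by simp
  have q2: "q \<ge> 2" unfolding qpk using p2 pk1 by (metis mult_le_mono mult.right_neutral)
  define A where "A = {a. a < q \<and> p dvd a}"
  define B where "B = {a. a < q \<and> coprime a q}"
  have copq: "coprime a q \<longleftrightarrow> \<not> p dvd a" for a
    unfolding q_def using coprime_prime_power_iff[OF p] .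
  have pq: "p dvd q" unfolding qpk by simp
  have AB: "{..<q} = A \<union> B" unfolding A_def B_def using copq by auto
  have disj: "A \<inter> B = {}" unfolding A_def B_def using copq by auto
  have relAB: "Rel q \<subseteq> (A \<times> A) \<union> (B \<times> B)"
  proof
    fix x assume "x \<in> Rel q"
    then obtain a b u where x: "x = (a, b)" "a < q" "b < q" "coprime u q" "[a = u * u * b] (mod q)"
      unfolding Rel_def by auto
    have ap: "[a = u * u * b] (mod p)" using x(5) pq by (rule cong_dvd_modulus_nat)
    have "p dvd a \<longleftrightarrow> p dvd b"
    proof
      assume "p dvd a"
      then have "p dvd u * u * b" using ap by (simp add: cong_dvd_iff)
      moreover have "\<not> p dvd u" using x(4) copq by simp
      ultimately show "p dvd b" using p by (simp add: prime_dvd_mult_iff)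
    next
      assume "p dvd b"
      then have "p dvd u * u * b" by simp
      then show "p dvd a" using ap by (simp add: cong_dvd_iff)
    qed
    then show "x \<in> (A \<times> A) \<union> (B \<times> B)" unfolding A_def B_def using x copq by auto
  qed
  have refl: "(x, x) \<in> Rel q" if "x \<in> A \<union> B" for x
    using that Rel_equiv[of q] AB unfolding equiv_def refl_on_def by blast
  have split: "NN q = card (A // (Rel q \<inter> A \<times> A)) + card (B // (Rel q \<inter> B \<times> B))"
    unfolding NN_def AB by (rule card_quotient_split[OF relAB disj refl]) (auto simp: A_def B_def)
  have partB: "card (B // (Rel q \<inter> B \<times> B)) = card {x. x < q \<and> [x * x = 1] (mod q)}"
    unfolding B_def by (rule units_classes[OF q2])
  have partA: "card (A // (Rel q \<inter> A \<times> A)) = NN (p ^ k)"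
  proof -
    define f where "f = (\<lambda>b. p * b)"
    have bij: "bij_betw f {..<p ^ k} A"
    proof (rule bij_betw_imageI)
      show "inj_on f {..<p ^ k}" unfolding f_def using p0 by (auto intro: inj_onI)
      show "f ` {..<p ^ k} = A"
      proof
        show "f ` {..<p ^ k} \<subseteq> A" unfolding f_def A_def qpk using p0 by auto
        show "A \<subseteq> f ` {..<p ^ k}"
        proof
          fix a assume "a \<in> A"
          then have a: "a < p * p ^ k" "p dvd a" unfolding A_def qpk by auto
          then obtain b where b: "a = p * b" by blast
          then have "b < p ^ k" using a(1) p0 by simp
          then show "a \<in> f ` {..<p ^ k}" unfolding f_def using b by auto
        qed
      qed
    qed
    have iff: "(a, b) \<in> Rel (p ^ k) \<longleftrightarrow> (f a, f b) \<in> Rel q \<inter> A \<times> A"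
      if a: "a \<in> {..<p ^ k}" and b: "b \<in> {..<p ^ k}" for a b
    proof -
      have fa: "f a \<in> A" "f b \<in> A" using bij a b unfolding bij_betw_def by auto
      have cg: "[f a = u * u * f b] (mod q) \<longleftrightarrow> [a = u * u * b] (mod p ^ k)" for u
      proof -
        have e: "u * u * (p * b) = p * (u * u * b)" by (simp add: algebra_simps)
        have "[f a = u * u * f b] (mod q) \<longleftrightarrow> [p * a = p * (u * u * b)] (mod p * p ^ k)"
          by (simp only: f_def qpk e)
        also have "\<dots> \<longleftrightarrow> [a = u * u * b] (mod p ^ k)" by (rule cong_scale[OF p0])
        finally show ?thesis .
      qed
      show ?thesis
      proof (cases k)
        case 0
        then have "a = 0" "b = 0" using a b by auto
        moreover have "(0, 0) \<in> Rel (p ^ k)" "(f 0, f 0) \<in> Rel q"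
          unfolding Rel_def f_def using q2 0 by (auto intro!: exI[of _ 1])
        ultimately show ?thesis using fa by auto
      next
        case (Suc k')
        have "coprime u (p ^ k) \<longleftrightarrow> coprime u q" for u
          unfolding q_def Suc using coprime_prime_power_iff[OF p, of u k'] coprime_prime_power_iff[OF p, of u "Suc k'"]
          by (simp only:)
        then show ?thesis unfolding Rel_def using a b fa cg unfolding A_def by auto
      qed
    qed
    show ?thesis unfolding NN_def
    proof (rule card_quotient_bij[OF bij Rel_sub _ iff, symmetric])
      show "Rel q \<inter> A \<times> A \<subseteq> A \<times> A" by blast
    qed auto
  qed
  show ?thesis using split partA partB unfolding q_def by simp
qed

lemma sq_minus_one: "q \<ge> (1::nat) \<Longrightarrow> [(q - 1) * (q - 1) = 1] (mod q)"
proof (cases "q = 1")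
  case True then show ?thesis by (simp add: cong_def)
next
  case False
  assume "q \<ge> 1"
  define m where "m = q - 2"
  have m: "q = m + 2" unfolding m_def using False \<open>q \<ge> 1\<close> by simp
  have e: "(q - 1) * (q - 1) = q * m + 1" unfolding m by (simp add: algebra_simps)
  have "[q * m + 1 = 0 + 1] (mod q)" by (intro cong_add) (simp_all add: cong_def)
  then show ?thesis unfolding e by simp
qed

lemma S_odd_prime_power:
  fixes p :: nat
  assumes p: "prime p" and odd: "p \<noteq> 2"
  shows "card {x. x < p ^ Suc k \<and> [x * x = 1] (mod p ^ Suc k)} = 2"
proof -
  define q where "q = p ^ Suc k"
  have p3: "p \<ge> 3" using prime_ge_2_nat[OF p] odd by simp
  have qp: "q \<ge> p" unfolding q_def using p3 by (simp add: self_le_power)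
  have q3: "q \<ge> 3" using qp p3 by simp
  have cop: "\<not> p dvd y \<Longrightarrow> coprime y q" for y unfolding q_def using coprime_prime_power_iff[OF p] by simp
  have "{x. x < q \<and> [x * x = 1] (mod q)} = {1, q - 1}"
  proof
    show "{1, q - 1} \<subseteq> {x. x < q \<and> [x * x = 1] (mod q)}" using q3 sq_minus_one[of q] by auto
    show "{x. x < q \<and> [x * x = 1] (mod q)} \<subseteq> {1, q - 1}"
    proof
      fix x assume "x \<in> {x. x < q \<and> [x * x = 1] (mod q)}"
      then have x: "x < q" "[x * x = 1] (mod q)" by auto
      have x1: "x \<ge> 1"
      proof (rule ccontr)
        assume "\<not> x \<ge> 1" then have "x = 0" by simp
        then show False using x(2) q3 by (simp add: cong_def)
      qed
      have "q dvd x * x - 1" using x(2) x1 cong_altdef_nat[of 1 "x * x" q] by (simp add: cong_sym_eq)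
      moreover have "x * x - 1 = (x - 1) * (x + 1)" using x1 by (simp add: algebra_simps)
      ultimately have d: "q dvd (x - 1) * (x + 1)" by simp
      have "\<not> (p dvd x - 1 \<and> p dvd x + 1)"
      proof
        assume "p dvd x - 1 \<and> p dvd x + 1"
        then have "p dvd (x + 1) - (x - 1)" using dvd_diff_nat by blast
        moreover have "(x + 1) - (x - 1) = 2" using x1 by simp
        ultimately have "p dvd 2" by simp
        then have "p \<le> 2" by (rule dvd_imp_le) simp
        then show False using p3 by simp
      qed
      then consider "\<not> p dvd x - 1" | "\<not> p dvd x + 1" by blast
      then show "x \<in> {1, q - 1}"
      proof cases
        case 1
        then have "coprime (x - 1) q" by (rule cop)
        then have c: "coprime q (x - 1)" by (simp add: coprime_commute)
        have "q dvd x + 1" using d coprime_dvd_mult_left_iff[OF c, of "x + 1"] by (metis mult.commute)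
        moreover have "x + 1 \<le> q" "x + 1 > 0" using x by auto
        ultimately have "x + 1 = q" by (meson dvd_imp_le le_antisym)
        then show ?thesis by auto
      next
        case 2
        then have "coprime (x + 1) q" by (rule cop)
        then have c: "coprime q (x + 1)" by (simp add: coprime_commute)
        have "q dvd x - 1" using d coprime_dvd_mult_left_iff[OF c, of "x - 1"] by (metis mult.commute)
        moreover have "x - 1 < q" using x by auto
        ultimately have "x - 1 = 0" by (metis dvd_imp_le not_less neq0_conv)
        then show ?thesis using x1 by auto
      qed
    qed
  qed
  moreover have "card {1, q - 1} = 2" using q3 by simp
  ultimately show ?thesis unfolding q_def by simp
qed

lemma S_two: "card {x::nat. x < 2 \<and> [x * x = 1] (mod 2)} = 1"
proof -
  have "{x::nat. x < 2 \<and> [x * x = 1] (mod 2)} = {1}"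
  proof
    show "{x::nat. x < 2 \<and> [x * x = 1] (mod 2)} \<subseteq> {1}"
    proof
      fix x assume "x \<in> {x::nat. x < 2 \<and> [x * x = 1] (mod 2)}"
      then have "x < 2" "[x * x = 1] (mod 2)" by auto
      moreover have "x = 0 \<or> x = 1" using \<open>x < 2\<close> by linarith
      ultimately show "x \<in> {1}" by (auto simp: cong_def)
    qed
  qed (auto simp: cong_def)
  then show ?thesis by simp
qed

lemma S_four: "card {x::nat. x < 4 \<and> [x * x = 1] (mod 4)} = 2"
proof -
  have "{x::nat. x < 4 \<and> [x * x = 1] (mod 4)} = {1, 3}"
  proof
    show "{x::nat. x < 4 \<and> [x * x = 1] (mod 4)} \<subseteq> {1, 3}"
    proof
      fix x assume "x \<in> {x::nat. x < 4 \<and> [x * x = 1] (mod 4)}"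
      then have "x < 4" "[x * x = 1] (mod 4)" by auto
      moreover have "x = 0 \<or> x = 1 \<or> x = 2 \<or> x = 3" using \<open>x < 4\<close> by linarith
      ultimately show "x \<in> {1, 3}" by (auto simp: cong_def)
    qed
  qed (auto simp: cong_def)
  then show ?thesis by simp
qed
lemma cong_mult_plus_one: "[q * t + 1 = 1] (mod (q::nat))"
proof -
  have "[q * t + 1 = 0 + 1] (mod q)" by (intro cong_add) (simp_all add: cong_def)
  then show ?thesis by simp
qed

lemma S_two_power:
  assumes k: "k \<ge> 3"
  shows "card {x::nat. x < 2 ^ k \<and> [x * x = 1] (mod 2 ^ k)} = 4"
proof -
  define m :: nat where "m = 2 ^ (k - 3)"
  have m1: "m \<ge> 1" unfolding m_def by simp
  have k3: "k = (k - 3) + 3" using k by simp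
  have q: "(2::nat) ^ k = 8 * m" unfolding m_def by (subst k3, subst power_add) simp
  define h where "h = 4 * m"
  have "{x. x < 8 * m \<and> [x * x = 1] (mod 8 * m)} = {1, h - 1, h + 1, 8 * m - 1}"
  proof
    show "{1, h - 1, h + 1, 8 * m - 1} \<subseteq> {x. x < 8 * m \<and> [x * x = 1] (mod 8 * m)}"
    proof -
      obtain m' where m': "m = Suc m'" using m1 by (cases m) auto
      have a: "(h - 1) * (h - 1) = 8 * m * (2 * m' + 1) + 1" unfolding h_def m' by (simp add: algebra_simps)
      have b: "(h + 1) * (h + 1) = 8 * m * (2 * m + 1) + 1" unfolding h_def by (simp add: algebra_simps)
      have c: "(8 * m - 1) * (8 * m - 1) = 8 * m * (8 * m' + 6) + 1" unfolding m' by (simp add: algebra_simps)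
      have ca: "[(h - 1) * (h - 1) = 1] (mod 8 * m)" unfolding a by (rule cong_mult_plus_one)
      have cb: "[(h + 1) * (h + 1) = 1] (mod 8 * m)" unfolding b by (rule cong_mult_plus_one)
      have cc: "[(8 * m - 1) * (8 * m - 1) = 1] (mod 8 * m)" unfolding c by (rule cong_mult_plus_one)
      have c1: "[1 * 1 = 1] (mod 8 * m)" by simp
      have lt: "1 < 8 * m" "h - 1 < 8 * m" "h + 1 < 8 * m" "8 * m - 1 < 8 * m" using m1 unfolding h_def by auto
      show ?thesis using ca cb cc c1 lt by auto
    qed
    show "{x. x < 8 * m \<and> [x * x = 1] (mod 8 * m)} \<subseteq> {1, h - 1, h + 1, 8 * m - 1}"
    proof
      fix x assume "x \<in> {x. x < 8 * m \<and> [x * x = 1] (mod 8 * m)}"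
      then have x: "x < 8 * m" "[x * x = 1] (mod 8 * m)" by auto
      have "odd x"
      proof
        assume "even x"
        then have "even (x * x)" by simp
        moreover have "(x * x) mod (8 * m) = 1" using x(2) m1 by (simp add: cong_def)
        moreover have "8 * m * ((x * x) div (8 * m)) + (x * x) mod (8 * m) = x * x" by (rule mult_div_mod_eq)
        ultimately have "even (8 * m * ((x * x) div (8 * m)) + 1)" by simp
        then show False by simp
      qed
      then obtain a where a: "x = 2 * a + 1" using oddE by blast
      have "8 * m dvd x * x - 1" using x(2) cong_altdef_nat[of 1 "x * x" "8 * m"] a by (simp add: cong_sym_eq)
      moreover have "x * x - 1 = 4 * (a * (a + 1))" unfolding a by (simp add: algebra_simps)
      ultimately have "4 * (2 * m) dvd 4 * (a * (a + 1))" by simp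
      then have d: "2 * m dvd a * (a + 1)" using nat_mult_dvd_cancel1[of 4 "2 * m" "a * (a + 1)"] by simp
      have cop2: "coprime y (2 * m)" if "odd y" for y
      proof -
        have "k - 2 = Suc (k - 3)" using k by simp
        then have "2 * m = 2 ^ (k - 2)" unfolding m_def by simp
        then show ?thesis using that by simp
      qed
      consider "even a" | "odd a" by blast
      then show "x \<in> {1, h - 1, h + 1, 8 * m - 1}"
      proof cases
        case 1
        then have c: "coprime (2 * m) (a + 1)" using cop2[of "a + 1"] by (simp add: coprime_commute)
        have "2 * m dvd a" using d coprime_dvd_mult_left_iff[OF c, of a] by simp
        then obtain t where t: "a = 2 * m * t" by blast
        have "x = h * t + 1" unfolding a t h_def by simp
        moreover have "t < 2"
        proof (rule ccontr)
          assume "\<not> t < 2" then have "h * t \<ge> h * 2" by simp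
          then show False using x(1) \<open>x = h * t + 1\<close> h_def by linarith
        qed
        ultimately have "x = 1 \<or> x = h + 1" by (auto simp: less_2_cases_iff)
        then show ?thesis by auto
      next
        case 2
        then have c: "coprime (2 * m) a" using cop2[of a] by (simp add: coprime_commute)
        have "2 * m dvd a + 1" using d coprime_dvd_mult_left_iff[OF c, of "a + 1"] by (simp add: mult.commute)
        then obtain t where t: "a + 1 = 2 * m * t" by blast
        have xt: "x + 1 = h * t" unfolding a h_def using t by simp
        have "t \<ge> 1" using xt by (cases t) auto
        moreover have "t \<le> 2"
        proof (rule ccontr)
          assume "\<not> t \<le> 2" then have "h * t \<ge> h * 3" by simp
          then show False using x(1) xt h_def by linarith
        qed
        ultimately have "t = 1 \<or> t = 2" by auto
        then have "x + 1 = h \<or> x + 1 = 8 * m" using xt unfolding h_def by auto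
        then show ?thesis by auto
      qed
    qed
  qed
  moreover have "card {1, h - 1, h + 1, 8 * m - 1} = 4"
  proof -
    have "(1::nat) \<noteq> h - 1" "(1::nat) \<noteq> h + 1" "(1::nat) \<noteq> 8 * m - 1" "h - 1 \<noteq> h + 1"
      "h - 1 \<noteq> 8 * m - 1" "h + 1 \<noteq> 8 * m - 1" using m1 h_def by linarith+
    then show ?thesis by simp
  qed
  ultimately show ?thesis unfolding q by simp
qed

lemma NN_odd: assumes p: "prime p" "p \<noteq> 2" shows "NN (p ^ k) = 2 * k + 1"
proof (induction k)
  case 0 then show ?case using NN_one by simp
next
  case (Suc k) then show ?case using NN_rec[OF p(1), of k] S_odd_prime_power[OF p, of k] by simp
qed

definition f2 :: "nat \<Rightarrow> nat" where
  "f2 k = (if k = 0 then 1 else if k = 1 then 2 else if k = 2 then 4 else 4 * (k - 1))"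

lemma NN_two: "NN (2 ^ k) = f2 k"
proof (induction k)
  case 0 then show ?case using NN_one by (simp add: f2_def)
next
  case (Suc k)
  have p2: "prime (2::nat)" by simp
  have "NN (2 ^ Suc k) = f2 k + card {x::nat. x < 2 ^ Suc k \<and> [x * x = 1] (mod 2 ^ Suc k)}"
    using NN_rec[OF p2, of k] Suc by simp
  moreover have "k = 0 \<or> k = 1 \<or> k \<ge> 2" by linarith
  ultimately show ?case
  proof (elim disjE)
    assume "NN (2 ^ Suc k) = f2 k + card {x::nat. x < 2 ^ Suc k \<and> [x * x = 1] (mod 2 ^ Suc k)}" "k = 0"
    then show ?thesis using S_two by (simp add: f2_def)
  next
    assume "NN (2 ^ Suc k) = f2 k + card {x::nat. x < 2 ^ Suc k \<and> [x * x = 1] (mod 2 ^ Suc k)}" "k = 1"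
    then show ?thesis using S_four by (simp add: f2_def)
  next
    assume a: "NN (2 ^ Suc k) = f2 k + card {x::nat. x < 2 ^ Suc k \<and> [x * x = 1] (mod 2 ^ Suc k)}" "k \<ge> 2"
    have "card {x::nat. x < 2 ^ Suc k \<and> [x * x = 1] (mod 2 ^ Suc k)} = 4"
      by (rule S_two_power) (use a in simp)
    moreover have "f2 (Suc k) = f2 k + 4"
    proof (cases "k = 2")
      case True then show ?thesis by (simp add: f2_def)
    next
      case False then have "k \<ge> 3" using a(2) by simp
      then show ?thesis by (cases k) (auto simp: f2_def)
    qed
    ultimately show ?thesis using a(1) by simp
  qed
qed

lemma NN_prod:
  fixes P :: "nat set"
  assumes "finite P" "\<forall>p\<in>P. prime p"
  shows "NN (\<Prod>p\<in>P. p ^ e p) = (\<Prod>p\<in>P. NN (p ^ e p))"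
  using assms
proof (induction P rule: finite_induct)
  case empty then show ?case using NN_one by simp
next
  case (insert p P)
  have pp: "prime p" using insert by auto
  have cop: "coprime (p ^ e p) (\<Prod>p\<in>P. p ^ e p)"
  proof (rule prod_coprime_right)
    fix q assume "q \<in> P"
    then have "coprime p q" using insert pp primes_coprime[of p q] by auto
    then show "coprime (p ^ e p) (q ^ e q)" by simp
  qed
  have pos1: "p ^ e p \<ge> 1" using pp prime_gt_0_nat by (simp add: Suc_leI)
  have pos2: "(\<Prod>p\<in>P. p ^ e p) \<ge> 1"
    using insert by (simp add: Suc_leI prime_gt_0_nat prod_pos)
  have "NN (\<Prod>p\<in>insert p P. p ^ e p) = NN (p ^ e p * (\<Prod>p\<in>P. p ^ e p))"
    using insert by simp
  also have "\<dots> = NN (p ^ e p) * NN (\<Prod>p\<in>P. p ^ e p)" by (rule NN_mult[OF cop pos1 pos2])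
  finally show ?case using insert by simp
qed

lemma NN_formula:
  assumes n: "n \<ge> 1"
  shows "NN n = f2 (multiplicity 2 n) * (\<Prod>p\<in>prime_factors n - {2}. 2 * multiplicity p n + 1)"
proof -
  have "NN n = NN (\<Prod>p\<in>prime_factors n. p ^ multiplicity p n)"
    using n prime_factorization_nat[of n] by simp
  also have "\<dots> = (\<Prod>p\<in>prime_factors n. NN (p ^ multiplicity p n))"
    by (rule NN_prod) auto
  also have "\<dots> = f2 (multiplicity 2 n) * (\<Prod>p\<in>prime_factors n - {2}. 2 * multiplicity p n + 1)"
  proof -
    have odd: "(\<Prod>p\<in>prime_factors n - {2}. NN (p ^ multiplicity p n))
        = (\<Prod>p\<in>prime_factors n - {2}. 2 * multiplicity p n + 1)"
    proof (rule prod.cong)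
      fix p assume "p \<in> prime_factors n - {2}"
      then have "prime p" "p \<noteq> 2" by (auto intro: in_prime_factors_imp_prime)
      then show "NN (p ^ multiplicity p n) = 2 * multiplicity p n + 1" by (rule NN_odd)
    qed simp
    show ?thesis
    proof (cases "2 \<in> prime_factors n")
      case True
      have "(\<Prod>p\<in>prime_factors n. NN (p ^ multiplicity p n))
          = NN (2 ^ multiplicity 2 n) * (\<Prod>p\<in>prime_factors n - {2}. NN (p ^ multiplicity p n))"
        by (rule prod.remove[OF _ True]) simp
      then show ?thesis using odd NN_two by simp
    next
      case False
      then have "\<not> 2 dvd n" using n by (simp add: in_prime_factors_iff)
      then have "multiplicity 2 n = 0" by (simp add: not_dvd_imp_multiplicity_0)
      then show ?thesis using odd False by (simp add: f2_def)
    qed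
  qed
  finally show ?thesis .
qed

lemma c_count_NN:
  assumes n: "n \<ge> 2"
  shows "c_count TYPE('k::{alg_closed_field, field_char_0}) n = NN n"
proof -
  have n1: "n \<ge> 1" using n by simp
  obtain g :: 'k where g: "prim n g" using prim_exists[OF n1] by blast
  have gn: "g ^ n = 1" using g unfolding prim_def by simp
  have bij: "bij_betw (\<lambda>a. g ^ a) {..<n} {z::'k. z ^ n = 1}"
    using prim_roots[OF g n1] by (simp add: bij_betw_def)
  define E where "E = {(z::'k, z'). z ^ n = 1 \<and> z' ^ n = 1 \<and> vec_monoidal_equiv n z z'}"
  have Esub: "E \<subseteq> {z::'k. z ^ n = 1} \<times> {z. z ^ n = 1}" unfolding E_def by auto
  have pw: "(g ^ b) ^ (u * u) = g ^ (u * u * b)" for b u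
    by (simp add: power_mult[symmetric] mult.commute)
  have rt: "(g ^ a) ^ n = 1" for a
    by (metis gn power_mult mult.commute power_one)
  have iff: "(a, b) \<in> Rel n \<longleftrightarrow> ((\<lambda>a. g ^ a) a, (\<lambda>a. g ^ a) b) \<in> E"
    if a: "a \<in> {..<n}" and b: "b \<in> {..<n}" for a b
  proof -
    have "((\<lambda>a. g ^ a) a, (\<lambda>a. g ^ a) b) \<in> E \<longleftrightarrow> vec_monoidal_equiv n (g ^ a) (g ^ b)"
      unfolding E_def using rt by simp
    also have "\<dots> \<longleftrightarrow> (\<exists>u. coprime u n \<and> g ^ a = (g ^ b) ^ (u * u))"
      using necessity[OF n, of "g ^ a" "g ^ b"] sufficiency[OF n rt, of _ "g ^ a" b] by blast
    also have "\<dots> \<longleftrightarrow> (\<exists>u. coprime u n \<and> [a = u * u * b] (mod n))"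
      using prim_pow_eq[OF g n1] pw by simp
    also have "\<dots> \<longleftrightarrow> (a, b) \<in> Rel n" unfolding Rel_def using a b by simp
    finally show ?thesis by simp
  qed
  have "NN n = card ({z::'k. z ^ n = 1} // E)"
    unfolding NN_def by (rule card_quotient_bij[OF bij Rel_sub Esub iff])
  then show ?thesis unfolding c_count_def E_def by simp
qed

lemma c_count_one: "c_count TYPE('k::field) 1 = 1"
proof -
  have r: "{z::'k. z ^ 1 = 1} = {1}" by auto
  show ?thesis unfolding c_count_def r by (simp add: quotient_def)
qed

theorem mainTheorem3:
  fixes n :: nat
  assumes "n \<ge> 1"
  defines "k0 \<equiv> multiplicity (2::nat) n"
  defines "P \<equiv> (\<Prod>p\<in>prime_factors n - {2}. 2 * multiplicity p n + 1)"
  shows "c_count TYPE('k::{alg_closed_field, field_char_0}) n =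
           (if k0 = 0 then P
            else if k0 = 1 then 2 * P
            else if k0 = 2 then 4 * P
            else 4 * (k0 - 1) * P)"
proof (cases "n = 1")
  case True
  then show ?thesis unfolding k0_def P_def using c_count_one by simp
next
  case False
  then have n2: "n \<ge> 2" using assms(1) by simp
  have "c_count TYPE('k) n = f2 k0 * P"
    unfolding k0_def P_def using c_count_NN[OF n2] NN_formula[OF assms(1)] by simp
  then show ?thesis by (simp add: f2_def)
qed

end
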